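(* Let $n\ge2$ be even and $1\le\kappa<n$. For $q\in\{2,4\}$ let $A_{\mathrm{BAL},\kappa\text{-WMU},q,n}$ denote the maximum size of a balanced $\kappa$-WMU code in $\mathbb{F}_q^n$, and let $A_{\mathrm{BAL},\mathrm{MU},2,n}$ denote the maximum size of a balanced MU code in $\mathbb{F}_2^n$. Then (i) $c_2\,\frac{\binom{n}{n/2}2^n}{n-\kappa+1}\le A_{\mathrm{BAL},\kappa\text{-WMU},4,n}\le\frac{\binom{n}{n/2}2^n}{n-\kappa+1}$, where $c_2=\frac{3}{64}$; (ii) $A_{\mathrm{BAL},\kappa\text{-WMU},2,n}\le\frac{\binom{n}{n/2}}{n-\kappa+1}$; (iii) $\frac{\binom{n}{n/2}}{2(n-1)}\le A_{\mathrm{BAL},\mathrm{MU},2,n}\le\frac{\binom{n}{n/2}}{n}$.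
   Context: $\mathbb{F}_2=\{0,1\}$ and $\mathbb{F}_4$ is identified with $\{\mathtt{A},\mathtt{T},\mathtt{C},\mathtt{G}\}$. A binary sequence of length $n$ is balanced if exactly $n/2$ entries are $1$; a quaternary (DNA) sequence of length $n$ is balanced if exactly $n/2$ entries lie in $\{\mathtt{G},\mathtt{C}\}$; a code is balanced if every codeword is. A code $\mathcal{C}\subseteq\mathbb{F}_q^n$ is $\kappa$-WMU if for all not necessarily distinct $\mathbf{a},\mathbf{b}\in\mathcal{C}$ and all $\kappa\le l<n$, $(a_1,\dots,a_l)\ne(b_{n-l+1},\dots,b_n)$; an MU (mutually uncorrelated) code is a $1$-WMU code, i.e. no proper prefix of any codeword equals a suffix of any codeword. *)

theory Defs
  imports Complex_Main
begin

(* Words of length n over F_q, with F_q identified with {0..<q}.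
   F_2 = {0,1}; F_4 = {A,T,C,G} identified with 0,1,2,3 (A=0,T=1,C=2,G=3). *)
definition words :: "nat \<Rightarrow> nat \<Rightarrow> nat list set" where
  "words q n = {x. length x = n \<and> set x \<subseteq> {0..<q}}"

(* "heavy" symbols: 1 for binary, {C,G} = {2,3} for DNA *)
definition heavy :: "nat \<Rightarrow> nat set" where
  "heavy q = (if q = 2 then {1} else {2,3})"

definition balanced_word :: "nat \<Rightarrow> nat list \<Rightarrow> bool" where
  "balanced_word q x \<longleftrightarrow> 2 * length (filter (\<lambda>c. c \<in> heavy q) x) = length x"

definition wmu :: "nat \<Rightarrow> nat \<Rightarrow> nat list set \<Rightarrow> bool" where
  "wmu \<kappa> n C \<longleftrightarrow> (\<forall>a\<in>C. \<forall>b\<in>C. \<forall>l. \<kappa> \<le> l \<longrightarrow> l < n \<longrightarrow> take l a \<noteq> drop (n - l) b)"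

definition mu :: "nat \<Rightarrow> nat list set \<Rightarrow> bool" where
  "mu n C \<longleftrightarrow> wmu 1 n C"

definition A_BAL_WMU :: "nat \<Rightarrow> nat \<Rightarrow> nat \<Rightarrow> nat" where
  "A_BAL_WMU q \<kappa> n = Max (card ` {C. C \<subseteq> words q n \<and> (\<forall>x\<in>C. balanced_word q x) \<and> wmu \<kappa> n C})"

definition A_BAL_MU :: "nat \<Rightarrow> nat \<Rightarrow> nat" where
  "A_BAL_MU q n = Max (card ` {C. C \<subseteq> words q n \<and> (\<forall>x\<in>C. balanced_word q x) \<and> mu n C})"

end

theory Submission
  imports Defs "HOL-Library.FuncSet"
begin

definition cnt :: "nat list \<Rightarrow> nat" where
  "cnt xs = length (filter (\<lambda>c. c = 1) xs)"

lemma words_iff: "x \<in> words q n \<longleftrightarrow> length x = n \<and> set x \<subseteq> {0..<q}"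
  by (simp add: words_def)

lemma finite_words: "finite (words q n)"
proof -
  have "words q n = {xs. set xs \<subseteq> {0..<q} \<and> length xs = n}" by (auto simp: words_def)
  then show ?thesis using finite_lists_length_eq[of "{0..<q}" n] by simp
qed

lemma card_words: "card (words q n) = q ^ n"
proof -
  have "words q n = {xs. set xs \<subseteq> {0..<q} \<and> length xs = n}" by (auto simp: words_def)
  then show ?thesis using card_lists_length_eq[of "{0..<q}" n] by simp
qed

lemma bal2: "balanced_word 2 x \<longleftrightarrow> 2 * cnt x = length x"
  by (simp add: balanced_word_def heavy_def cnt_def)

lemma bal4:
  assumes "x \<in> words 4 n"
  shows "balanced_word 4 x \<longleftrightarrow> 2 * cnt (map (\<lambda>c. c div 2) x) = n"
proof -
  have "filter (\<lambda>c. c \<in> {2,3}) x = filter ((\<lambda>c. c = 1) \<circ> (\<lambda>c. c div 2)) x"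
  proof (rule filter_cong)
    fix c assume "c \<in> set x"
    then have "c < 4" using assms by (auto simp: words_def)
    then show "(c \<in> {2,3}) = ((\<lambda>c. c = 1) \<circ> (\<lambda>c. c div 2)) c" by auto
  qed simp
  then show ?thesis using assms
    by (simp add: balanced_word_def heavy_def cnt_def filter_map words_def)
qed

lemma card_cnt: "card {x \<in> words 2 L. cnt x = k} = L choose k"
proof -
  let ?f = "\<lambda>x::nat list. {i. i < L \<and> x ! i = 1}"
  have "bij_betw ?f {x \<in> words 2 L. cnt x = k} {B. B \<subseteq> {0..<L} \<and> card B = k}"
  proof (rule bij_betwI[where g = "\<lambda>B. map (\<lambda>i. if i \<in> B then 1 else 0) [0..<L]"])
    show "?f \<in> {x \<in> words 2 L. cnt x = k} \<rightarrow> {B. B \<subseteq> {0..<L} \<and> card B = k}"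
      by (auto simp: words_def cnt_def length_filter_conv_card)
    show "(\<lambda>B. map (\<lambda>i. if i \<in> B then 1 else 0) [0..<L]) \<in> {B. B \<subseteq> {0..<L} \<and> card B = k} \<rightarrow> {x \<in> words 2 L. cnt x = k}"
    proof
      fix B assume B: "B \<in> {B. B \<subseteq> {0..<L} \<and> card B = k}"
      let ?x = "map (\<lambda>i. if i \<in> B then 1 else 0) [0..<L] :: nat list"
      have "{i. i < length ?x \<and> ?x ! i = 1} = B" using B by (auto split: if_splits)
      then show "?x \<in> {x \<in> words 2 L. cnt x = k}" using B
        by (auto simp: words_def cnt_def length_filter_conv_card)
    qed
    fix x assume x: "x \<in> {x \<in> words 2 L. cnt x = k}"
    show "map (\<lambda>i. if i \<in> ?f x then 1 else 0) [0..<L] = x"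
    proof (rule nth_equalityI)
      fix i assume "i < length (map (\<lambda>i. if i \<in> ?f x then 1 else 0) [0..<L])"
      then have i: "i < L" by simp
      then have "x ! i \<in> set x" using x by (simp add: words_def)
      then have "x ! i < 2" using x by (auto simp: words_def)
      then show "map (\<lambda>i. if i \<in> ?f x then 1 else 0) [0..<L] ! i = x ! i" using i by auto
    qed (use x in \<open>simp add: words_def\<close>)
  next
    fix B assume B: "B \<in> {B. B \<subseteq> {0..<L} \<and> card B = k}"
    then show "?f (map (\<lambda>i. if i \<in> B then 1 else 0) [0..<L]) = B" by (auto split: if_splits)
  qed
  then have "card {x \<in> words 2 L. cnt x = k} = card {B. B \<subseteq> {0..<L} \<and> card B = k}"
    by (rule bij_betw_same_card)
  then show ?thesis by (simp add: n_subsets)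
qed

lemma comb:
  assumes lx: "length x = n" and ly: "length y = n" and sx: "set x \<subseteq> {0..<2}" and sy: "set y \<subseteq> {0..<2}"
  shows "map (\<lambda>c. c div 2) (map (\<lambda>(a,b). 2*a+b) (zip x y)) = x \<and>
         map (\<lambda>c. c mod 2) (map (\<lambda>(a,b). 2*a+b) (zip x y)) = y \<and>
         map (\<lambda>(a,b). 2*a+b) (zip x y) \<in> words 4 n"
proof -
  let ?w = "map (\<lambda>(a,b). 2*a+b) (zip x y)"
  have xy: "x ! i < 2 \<and> y ! i < 2" if i: "i < n" for i
  proof -
    have "x ! i \<in> set x" "y ! i \<in> set y" using i lx ly by simp_all
    then show ?thesis using sx sy by auto
  qed
  have e1: "map (\<lambda>c. c div 2) ?w = x"
  proof (rule nth_equalityI)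
    fix i assume "i < length (map (\<lambda>c. c div 2) ?w)"
    then have i: "i < n" using lx ly by simp
    then show "map (\<lambda>c. c div 2) ?w ! i = x ! i" using xy[OF i] lx ly by simp
  qed (simp add: lx ly)
  have e2: "map (\<lambda>c. c mod 2) ?w = y"
  proof (rule nth_equalityI)
    fix i assume "i < length (map (\<lambda>c. c mod 2) ?w)"
    then have i: "i < n" using lx ly by simp
    then show "map (\<lambda>c. c mod 2) ?w ! i = y ! i" using xy[OF i] lx ly by simp
  qed (simp add: lx ly)
  have "set ?w \<subseteq> {0..<4}"
  proof
    fix c assume "c \<in> set ?w"
    then obtain i where i: "i < length ?w" and c: "c = ?w ! i" by (metis in_set_conv_nth)
    then have i': "i < n" using lx ly by simp
    then show "c \<in> {0..<4}" using c xy[OF i'] lx ly by simp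
  qed
  then show ?thesis using e1 e2 lx ly by (simp add: words_def)
qed

lemma split4: "w \<in> words 4 n \<Longrightarrow> map (\<lambda>(a,b). 2*a+b) (zip (map (\<lambda>c. c div 2) w) (map (\<lambda>c. c mod 2) w)) = w"
  by (rule nth_equalityI) simp_all

lemma words2_of4: assumes "w \<in> words 4 n"
  shows "map (\<lambda>c. c div 2) w \<in> words 2 n" "map (\<lambda>c. c mod 2) w \<in> words 2 n"
proof -
  have s4: "set w \<subseteq> {0..<4}" and lw: "length w = n" using assms by (auto simp: words_def)
  have "set (map (\<lambda>c. c div 2) w) \<subseteq> {0..<2}"
  proof
    fix y assume "y \<in> set (map (\<lambda>c. c div 2) w)"
    then obtain c where "c \<in> set w" "y = c div 2" by auto
    then show "y \<in> {0..<2}" using s4 by auto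
  qed
  then show "map (\<lambda>c. c div 2) w \<in> words 2 n" using lw by (simp add: words_def)
  have "set (map (\<lambda>c. c mod 2) w) \<subseteq> {0..<2}"
  proof
    fix y assume "y \<in> set (map (\<lambda>c. c mod 2) w)"
    then obtain c where "c \<in> set w" "y = c mod 2" by auto
    then show "y \<in> {0..<2}" by auto
  qed
  then show "map (\<lambda>c. c mod 2) w \<in> words 2 n" using lw by (simp add: words_def)
qed

lemma card_prod4:
  "card {w \<in> words 4 n. P (map (\<lambda>c. c div 2) w) \<and> Q (map (\<lambda>c. c mod 2) w)}
   = card {x \<in> words 2 n. P x} * card {y \<in> words 2 n. Q y}"
proof -
  let ?f = "\<lambda>w::nat list. (map (\<lambda>c. c div 2) w, map (\<lambda>c. c mod 2) w)"
  let ?g = "\<lambda>p. map (\<lambda>(a,b). 2*a+b) (zip (fst p) (snd p))"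
  have "bij_betw ?f {w \<in> words 4 n. P (map (\<lambda>c. c div 2) w) \<and> Q (map (\<lambda>c. c mod 2) w)}
          ({x \<in> words 2 n. P x} \<times> {y \<in> words 2 n. Q y})"
  proof (rule bij_betwI[where g = ?g])
    show "?f \<in> {w \<in> words 4 n. P (map (\<lambda>c. c div 2) w) \<and> Q (map (\<lambda>c. c mod 2) w)} \<rightarrow> ({x \<in> words 2 n. P x} \<times> {y \<in> words 2 n. Q y})"
      using words2_of4 by blast
    show "?g \<in> ({x \<in> words 2 n. P x} \<times> {y \<in> words 2 n. Q y}) \<rightarrow> {w \<in> words 4 n. P (map (\<lambda>c. c div 2) w) \<and> Q (map (\<lambda>c. c mod 2) w)}"
    proof
      fix p assume p: "p \<in> {x \<in> words 2 n. P x} \<times> {y \<in> words 2 n. Q y}"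
      then have "length (fst p) = n" "length (snd p) = n" "set (fst p) \<subseteq> {0..<2}" "set (snd p) \<subseteq> {0..<2}"
        by (auto simp: words_def)
      from comb[OF this] show "?g p \<in> {w \<in> words 4 n. P (map (\<lambda>c. c div 2) w) \<and> Q (map (\<lambda>c. c mod 2) w)}"
        using p by auto
    qed
    fix w assume w: "w \<in> {w \<in> words 4 n. P (map (\<lambda>c. c div 2) w) \<and> Q (map (\<lambda>c. c mod 2) w)}"
    then show "?g (?f w) = w" using split4 by auto
  next
    fix p assume p: "p \<in> {x \<in> words 2 n. P x} \<times> {y \<in> words 2 n. Q y}"
    then have "length (fst p) = n" "length (snd p) = n" "set (fst p) \<subseteq> {0..<2}" "set (snd p) \<subseteq> {0..<2}"
      by (auto simp: words_def)
    from comb[OF this] show "?f (?g p) = p" by (simp add: prod_eq_iff)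
  qed
  then show ?thesis by (simp add: bij_betw_same_card card_cartesian_product)
qed

lemma mod2n: "(x::nat) < 2*n \<Longrightarrow> x mod n = (if x < n then x else x - n)"
proof (cases "x < n")
  case False
  assume "x < 2*n"
  then have "x - n < n" using False by simp
  moreover have "x mod n = (x - n) mod n" using False by (simp add: le_mod_geq)
  ultimately show ?thesis using False by simp
qed simp

lemma modeq:
  fixes i j a b n :: nat
  assumes "i < n" "j < n" "a < n" "b < n" "(i+a) mod n = (j+b) mod n"
  shows "i + a = j + b \<or> i + a = j + b + n \<or> j + b = i + a + n"
proof -
  have h1: "i + a < 2*n" "j + b < 2*n" using assms by auto
  show ?thesis
  proof (cases "i + a < n")
    case True
    then have e1: "(i+a) mod n = i + a" by simp
    show ?thesis
    proof (cases "j + b < n")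
      case True
      then have "(j+b) mod n = j + b" by simp
      then show ?thesis using e1 assms(5) by simp
    next
      case False
      then have "(j+b) mod n = j + b - n" using mod2n[OF h1(2)] by simp
      then show ?thesis using e1 assms(5) False by linarith
    qed
  next
    case F1: False
    then have e1: "(i+a) mod n = i + a - n" using mod2n[OF h1(1)] by simp
    show ?thesis
    proof (cases "j + b < n")
      case True
      then have "(j+b) mod n = j + b" by simp
      then show ?thesis using e1 assms(5) F1 by linarith
    next
      case False
      then have "(j+b) mod n = j + b - n" using mod2n[OF h1(2)] by simp
      then show ?thesis using e1 assms(5) False F1 by linarith
    qed
  qed
qed

lemma sep_card:
  assumes I: "I \<subseteq> {0..<n}" and t1: "1 \<le> t" and tn: "t \<le> n"
    and sep: "\<forall>i\<in>I. \<forall>j\<in>I. i < j \<longrightarrow> t \<le> j - i \<and> t \<le> n - (j - i)"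
  shows "card I * t \<le> n"
proof -
  define B where "B i = (\<lambda>a. (i+a) mod n) ` {0..<t}" for i
  have fI: "finite I" using I finite_subset by blast
  have cB: "card (B i) = t" if "i \<in> I" for i
  proof -
    have i: "i < n" using that I by auto
    have "inj_on (\<lambda>a. (i+a) mod n) {0..<t}"
    proof (rule inj_onI)
      fix a b assume a: "a \<in> {0..<t}" and b: "b \<in> {0..<t}" and e: "(i+a) mod n = (i+b) mod n"
      have "a < n" "b < n" using a b tn by auto
      from modeq[OF i i this e] show "a = b" using \<open>a < n\<close> \<open>b < n\<close> by linarith
    qed
    then show ?thesis unfolding B_def by (simp add: card_image)
  qed
  have disj: "B i \<inter> B j = {}" if "i \<in> I" "j \<in> I" "i \<noteq> j" for i j
  proof -
    have key: "B i \<inter> B j = {}" if ij: "i \<in> I" "j \<in> I" "i < j" for i j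
    proof (rule ccontr)
      assume "B i \<inter> B j \<noteq> {}"
      then obtain a b where a: "a < t" and b: "b < t" and e: "(i+a) mod n = (j+b) mod n"
        unfolding B_def by auto
      have i: "i < n" and j: "j < n" using ij I by auto
      have s: "t \<le> j - i" "t \<le> n - (j - i)" using sep ij by auto
      have "a < n" "b < n" using a b tn by auto
      from modeq[OF i j this e] show False using a b s ij j by linarith
    qed
    show ?thesis
    proof (cases "i < j")
      case True then show ?thesis using key that by blast
    next
      case False then have "j < i" using that by simp
      then show ?thesis using key that by blast
    qed
  qed
  have sub: "(\<Union>i\<in>I. B i) \<subseteq> {0..<n}"
    unfolding B_def using tn t1 by auto
  have "card (\<Union>i\<in>I. B i) = (\<Sum>i\<in>I. card (B i))"
  proof (rule card_UN_disjoint)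
    show "finite I" by (rule fI)
    show "\<forall>i\<in>I. finite (B i)" unfolding B_def by simp
    show "\<forall>i\<in>I. \<forall>j\<in>I. i \<noteq> j \<longrightarrow> B i \<inter> B j = {}" using disj by blast
  qed
  also have "\<dots> = (\<Sum>i\<in>I. t)" by (rule sum.cong) (simp_all add: cB)
  also have "\<dots> = card I * t" by simp
  finally have "card I * t = card (\<Union>i\<in>I. B i)" by simp
  also have "\<dots> \<le> card {0..<n}" by (rule card_mono) (use sub in auto)
  also have "\<dots> = n" by simp
  finally show ?thesis .
qed

lemma rotate_len: "length w = n \<Longrightarrow> rotate n w = w"
  by (simp add: rotate_drop_take)

lemma wmu_rot:
  assumes w: "wmu \<kappa> n C" and a: "length a = n" "a \<in> C" "rotate d a \<in> C"
    and d: "1 \<le> d" "d \<le> n - \<kappa>" and k: "1 \<le> \<kappa>" "\<kappa> < n"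
  shows False
proof -
  have dn: "d < n" using d k by simp
  have "rotate d a = drop d a @ take d a" using dn a by (simp add: rotate_drop_take)
  then have e: "take (n - d) (rotate d a) = drop (n - (n - d)) a" using dn a by simp
  have "\<kappa> \<le> n - d" "n - d < n" using d k by auto
  then show False using w a e unfolding wmu_def by blast
qed

lemma card_ind: "finite A \<Longrightarrow> card {x\<in>A. P x} = (\<Sum>x\<in>A. if P x then 1 else 0)"
  using sum.inter_filter[of A "\<lambda>_. (1::nat)" P] by simp

lemma upper:
  assumes fin: "finite W" and len: "\<forall>w\<in>W. length w = n"
    and rot: "\<forall>w\<in>W. \<forall>i. rotate i w \<in> W" and CW: "C \<subseteq> W"
    and w: "wmu \<kappa> n C" and k: "1 \<le> \<kappa>" "\<kappa> < n"
  shows "card C * (n - \<kappa> + 1) \<le> card W"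
proof -
  define t where "t = n - \<kappa> + 1"
  have c1: "card {w\<in>W. rotate i w \<in> C} = card C" if i: "i < n" for i
  proof -
    have "bij_betw (rotate i) {w\<in>W. rotate i w \<in> C} C"
    proof (rule bij_betwI[where g = "rotate (n - i)"])
      show "rotate i \<in> {w \<in> W. rotate i w \<in> C} \<rightarrow> C" by auto
      show "rotate (n - i) \<in> C \<rightarrow> {w \<in> W. rotate i w \<in> C}"
      proof
        fix c assume c: "c \<in> C"
        then have "length c = n" "c \<in> W" using CW len by auto
        then show "rotate (n - i) c \<in> {w \<in> W. rotate i w \<in> C}"
          using c rot i by (simp add: rotate_rotate rotate_len)
      qed
      fix x assume "x \<in> {w \<in> W. rotate i w \<in> C}"
      then have "length x = n" using len by auto
      then show "rotate (n - i) (rotate i x) = x" using i by (simp add: rotate_rotate rotate_len)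
    next
      fix c assume c: "c \<in> C"
      then have "length c = n" using CW len by auto
      then show "rotate i (rotate (n - i) c) = c" using i by (simp add: rotate_rotate rotate_len)
    qed
    then show ?thesis by (rule bij_betw_same_card)
  qed
  have sw: "(\<Sum>i\<in>{0..<n}. card {w\<in>W. rotate i w \<in> C}) = (\<Sum>w\<in>W. card {i\<in>{0..<n}. rotate i w \<in> C})"
  proof -
    have "(\<Sum>i\<in>{0..<n}. card {w\<in>W. rotate i w \<in> C}) = (\<Sum>i\<in>{0..<n}. \<Sum>w\<in>W. if rotate i w \<in> C then 1 else 0)"
      by (rule sum.cong) (simp_all add: card_ind[OF fin])
    also have "\<dots> = (\<Sum>w\<in>W. \<Sum>i\<in>{0..<n}. if rotate i w \<in> C then 1 else 0)"
      by (rule sum.swap)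
    also have "\<dots> = (\<Sum>w\<in>W. card {i\<in>{0..<n}. rotate i w \<in> C})"
      by (rule sum.cong) (simp_all only: card_ind[OF finite_atLeastLessThan])
    finally show ?thesis .
  qed
  have per: "card {i\<in>{0..<n}. rotate i w \<in> C} * t \<le> n" if wW: "w \<in> W" for w
  proof (rule sep_card)
    show "{i \<in> {0..<n}. rotate i w \<in> C} \<subseteq> {0..<n}" by auto
    show "1 \<le> t" "t \<le> n" using k t_def by auto
    have lw: "length w = n" using wW len by auto
    show "\<forall>i\<in>{i \<in> {0..<n}. rotate i w \<in> C}. \<forall>j\<in>{i \<in> {0..<n}. rotate i w \<in> C}. i < j \<longrightarrow> t \<le> j - i \<and> t \<le> n - (j - i)"
    proof (intro ballI impI)
      fix i j assume i: "i \<in> {i \<in> {0..<n}. rotate i w \<in> C}" and j: "j \<in> {i \<in> {0..<n}. rotate i w \<in> C}" and ij: "i < j"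
      have ri: "rotate i w \<in> C" "length (rotate i w) = n" and rj: "rotate j w \<in> C" "length (rotate j w) = n"
        using i j lw by auto
      have jn: "j < n" using j by auto
      show "t \<le> j - i \<and> t \<le> n - (j - i)"
      proof (rule ccontr)
        assume "\<not> (t \<le> j - i \<and> t \<le> n - (j - i))"
        then consider "j - i \<le> n - \<kappa>" | "n - (j - i) \<le> n - \<kappa>" using t_def by linarith
        then show False
        proof cases
          case 1
          have "rotate (j - i) (rotate i w) = rotate j w" using ij by (simp add: rotate_rotate)
          then have r: "rotate (j - i) (rotate i w) \<in> C" using rj by simp
          have "1 \<le> j - i" using ij by simp
          then show False using wmu_rot[OF w ri(2) ri(1) r _ 1 k] by simp
        next
          case 2
          have e: "n - (j - i) + j = n + i" using ij jn by simp
          have "rotate (n - (j - i)) (rotate j w) = rotate (n - (j - i) + j) w"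
            by (rule rotate_rotate)
          also have "\<dots> = rotate n (rotate i w)" unfolding e by (rule rotate_rotate[symmetric])
          also have "\<dots> = rotate i w" using ri(2) by (rule rotate_len)
          finally have r: "rotate (n - (j - i)) (rotate j w) \<in> C" using ri by simp
          have "1 \<le> n - (j - i)" using ij jn by simp
          then show False using wmu_rot[OF w rj(2) rj(1) r _ 2 k] by simp
        qed
      qed
    qed
  qed
  have "(\<Sum>i\<in>{0..<n}. card {w\<in>W. rotate i w \<in> C}) = (\<Sum>i\<in>{0..<n}. card C)"
    by (rule sum.cong) (simp_all add: c1)
  also have "(\<Sum>i\<in>{0..<n}. card C) = n * card C" by simp
  finally have e0: "(\<Sum>i\<in>{0..<n}. card {w\<in>W. rotate i w \<in> C}) = n * card C" .
  have "card C * t * n = (n * card C) * t" by (simp only: mult.commute mult.left_commute)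
  also have "\<dots> = (\<Sum>i\<in>{0..<n}. card {w\<in>W. rotate i w \<in> C}) * t" by (simp only: e0)
  also have "\<dots> = (\<Sum>w\<in>W. card {i\<in>{0..<n}. rotate i w \<in> C} * t)" unfolding sw by (rule sum_distrib_right)
  also have "\<dots> \<le> (\<Sum>w\<in>W. n)" by (rule sum_mono) (use per in auto)
  also have "\<dots> = card W * n" by simp
  finally have "card C * t * n \<le> card W * n" .
  moreover have "0 < n" using k by simp
  ultimately have "card C * t \<le> card W" by (rule mult_right_le_imp_le)
  then show ?thesis unfolding t_def .
qed


lemma cnt_append[simp]: "cnt (xs @ ys) = cnt xs + cnt ys"
  by (simp add: cnt_def)

lemma cnt_Nil[simp]: "cnt [] = 0"
  by (simp add: cnt_def)

lemma cnt_rotate[simp]: "cnt (rotate k w) = cnt w"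
proof -
  have "cnt w = cnt (take (k mod length w) w @ drop (k mod length w) w)" by simp
  then show ?thesis unfolding rotate_drop_take cnt_append by simp
qed

definition dyck :: "nat \<Rightarrow> nat list set" where
  "dyck n = {x \<in> words 2 n. balanced_word 2 x \<and> (\<forall>j. 0 < j \<and> j < n \<longrightarrow> 2 * cnt (take j x) < j)}"

lemma dyck_mu: "mu n (dyck n)"
  unfolding mu_def wmu_def
proof (intro ballI allI impI)
  fix a b l assume a: "a \<in> dyck n" and b: "b \<in> dyck n" and l: "1 \<le> l" "l < n"
  show "take l a \<noteq> drop (n - l) b"
  proof
    assume e: "take l a = drop (n - l) b"
    have lb: "length b = n" and bb: "2 * cnt b = n" using b by (auto simp: dyck_def words_def bal2)
    have "cnt b = cnt (take (n - l) b) + cnt (drop (n - l) b)"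
      using cnt_append[of "take (n - l) b" "drop (n - l) b"] by simp
    moreover have "2 * cnt (take (n - l) b) < n - l" using b l by (auto simp: dyck_def)
    moreover have "2 * cnt (take l a) < l" using a l by (auto simp: dyck_def)
    ultimately show False using e bb l by simp
  qed
qed

lemma cycle:
  assumes w: "w \<in> words 2 L" and L: "L = 2*m - 1" and m: "1 \<le> m" and c: "cnt w = m - 1"
  shows "\<exists>i<L. \<forall>j. 0 < j \<and> j < L \<longrightarrow> 2 * cnt (take j (rotate i w)) < j"
proof -
  define h where "h j = int j - 2 * int (cnt (take j w))" for j
  have lw: "length w = L" using w by (simp add: words_def)
  have L1: "1 \<le> L" using L m by simp
  define \<mu> where "\<mu> = Min (h ` {0..<L})"
  define I0 where "I0 = {j\<in>{0..<L}. h j = \<mu>}"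
  have "\<mu> \<in> h ` {0..<L}" unfolding \<mu>_def using L1 by (intro Min_in) auto
  then have I0ne: "I0 \<noteq> {}" unfolding I0_def by auto
  have fI0: "finite I0" unfolding I0_def by simp
  define i where "i = Max I0"
  have iI0: "i \<in> I0" unfolding i_def using fI0 I0ne by (rule Max_in)
  then have iL: "i < L" and hi: "h i = \<mu>" unfolding I0_def by auto
  have hmin: "\<mu> \<le> h j" if "j < L" for j unfolding \<mu>_def using that by (intro Min_le) auto
  have hgt: "\<mu> < h j" if "i < j" "j < L" for j
  proof -
    have "j \<notin> I0"
    proof
      assume jI: "j \<in> I0"
      have "j \<le> i" using Max_ge[OF fI0 jI] unfolding i_def .
      then show False using that by simp
    qed
    then have "h j \<noteq> \<mu>" using that unfolding I0_def by auto
    then show ?thesis using hmin[OF that(2)] by simp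
  qed
  have h0: "h 0 = 0" unfolding h_def by simp
  have hL: "h L = 1" unfolding h_def using lw c L m by simp
  have mu0: "\<mu> \<le> 0" using hmin[of 0] L1 h0 by simp
  have rot: "rotate i w = drop i w @ take i w" using iL lw by (simp add: rotate_drop_take)
  have ctake: "cnt (take (i + j) w) = cnt (take i w) + cnt (take j (drop i w))" for j
    by (simp add: take_add)
  have cw: "cnt w = cnt (take i w) + cnt (drop i w)"
    using cnt_append[of "take i w" "drop i w"] by simp
  show ?thesis
  proof (intro exI[of _ i] conjI allI impI)
    show "i < L" by (rule iL)
    fix j assume j: "0 < j \<and> j < L"
    show "2 * cnt (take j (rotate i w)) < j"
    proof (cases "i + j \<le> L")
      case True
      then have tj: "take j (rotate i w) = take j (drop i w)" using rot lw by simp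
      have "int j - 2 * int (cnt (take j (drop i w))) = h (i + j) - h i"
        unfolding h_def using ctake[of j] by simp
      moreover have "h i < h (i + j)"
      proof (cases "i + j < L")
        case True then show ?thesis using hgt[of "i+j"] hi j by simp
      next
        case False then have "i + j = L" using \<open>i + j \<le> L\<close> by simp
        then show ?thesis using hL hi mu0 by simp
      qed
      ultimately show ?thesis using tj by simp
    next
      case False
      define s where "s = i + j - L"
      have s: "s < L" "j = (L - i) + s" "s < i" using False j iL unfolding s_def by auto
      have tj: "take j (rotate i w) = drop i w @ take s w" using rot lw s by (simp add: min_def)
      have "int j - 2 * int (cnt (take j (rotate i w))) = h s + h L - h i"
        unfolding h_def tj using cw s lw iL by simp
      moreover have "h i \<le> h s" using hmin[OF s(1)] hi by simp
      ultimately show ?thesis using hL by simp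
    qed
  qed
qed


lemma cnt_one[simp]: "cnt [1] = 1" "cnt [Suc 0] = 1"
  by (simp_all add: cnt_def)

lemma dyck_card:
  assumes n: "n = 2*m" and m: "1 \<le> m"
  shows "(n - 1) choose (m - 1) \<le> (n - 1) * card (dyck n)"
proof -
  define L where "L = n - 1"
  define T where "T = {w\<in>words 2 L. cnt w = m - 1}"
  define G where "G = {g\<in>T. g @ [1] \<in> dyck n}"
  have a: "g @ [1] \<in> dyck n" if g: "g \<in> T" and gd: "\<forall>j. 0 < j \<and> j < L \<longrightarrow> 2 * cnt (take j g) < j" for g
  proof -
    have lg: "length g = L" and sg: "set g \<subseteq> {0..<2}" and cg: "cnt g = m - 1"
      using g unfolding T_def words_def by auto
    have "g @ [1] \<in> words 2 n" using lg sg n m unfolding L_def words_def by auto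
    moreover have "balanced_word 2 (g @ [1])" unfolding bal2 using lg cg n m L_def by simp
    moreover have "2 * cnt (take j (g @ [1])) < j" if j: "0 < j \<and> j < n" for j
    proof (cases "j < L")
      case True
      then have "take j (g @ [1]) = take j g" using lg by simp
      then show ?thesis using gd True j by simp
    next
      case False
      then have "j = L" using j n L_def by linarith
      then have "take j (g @ [1]) = g" using lg by simp
      then show ?thesis using cg \<open>j = L\<close> n m L_def by simp
    qed
    ultimately show ?thesis unfolding dyck_def by blast
  qed
  have b: "T \<subseteq> (\<Union>j\<in>{0..<L}. rotate j ` G)"
  proof
    fix w assume wT: "w \<in> T"
    then have ww: "w \<in> words 2 L" and cw: "cnt w = m - 1" unfolding T_def by auto
    have LL: "L = 2*m - 1" using n L_def by simp
    obtain i where iL: "i < L" and gd: "\<forall>j. 0 < j \<and> j < L \<longrightarrow> 2 * cnt (take j (rotate i w)) < j"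
      using cycle[OF ww LL m cw] by blast
    have lw: "length w = L" using ww by (simp add: words_def)
    have rT: "rotate i w \<in> T" using wT unfolding T_def words_def by simp
    then have gG: "rotate i w \<in> G" using a[OF rT gd] unfolding G_def by simp
    define j0 where "j0 = (if i = 0 then 0 else L - i)"
    have "rotate j0 (rotate i w) = w"
      using iL lw unfolding j0_def by (simp add: rotate_rotate rotate_len)
    then have "w \<in> rotate j0 ` G" using gG by (metis imageI)
    moreover have "j0 \<in> {0..<L}" using iL unfolding j0_def by simp
    ultimately show "w \<in> (\<Union>j\<in>{0..<L}. rotate j ` G)" by blast
  qed
  have fG: "finite G" unfolding G_def T_def using finite_words by simp
  have "card T \<le> card (\<Union>j\<in>{0..<L}. rotate j ` G)"
    by (rule card_mono) (use b fG in auto)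
  also have "\<dots> \<le> (\<Sum>j\<in>{0..<L}. card (rotate j ` G))" by (rule card_UN_le) simp
  also have "\<dots> \<le> (\<Sum>j\<in>{0..<L}. card G)" by (rule sum_mono) (rule card_image_le[OF fG])
  also have "\<dots> = L * card G" by simp
  finally have c: "card T \<le> L * card G" .
  have "card G \<le> card (dyck n)"
  proof -
    have "inj_on (\<lambda>g. g @ [1]) G" by (rule inj_onI) simp
    moreover have "(\<lambda>g. g @ [1]) ` G \<subseteq> dyck n" unfolding G_def by auto
    moreover have "finite (dyck n)" unfolding dyck_def using finite_words by simp
    ultimately show ?thesis by (rule card_inj_on_le)
  qed
  then have "L * card G \<le> L * card (dyck n)" by (rule mult_le_mono2)
  moreover have "card T = L choose (m - 1)" unfolding T_def by (rule card_cnt)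
  ultimately have "L choose (m - 1) \<le> L * card (dyck n)" using c by linarith
  then show ?thesis unfolding L_def .
qed


lemma card_prefix:
  assumes sp: "set p \<subseteq> {0..<2}" and lp: "length p \<le> n"
  shows "card {s\<in>words 2 n. take (length p) s = p} = 2 ^ (n - length p)"
proof -
  have "bij_betw (\<lambda>x. p @ x) (words 2 (n - length p)) {s\<in>words 2 n. take (length p) s = p}"
  proof (rule bij_betwI[where g = "drop (length p)"])
    show "(@) p \<in> words 2 (n - length p) \<rightarrow> {s \<in> words 2 n. take (length p) s = p}"
      using sp lp by (auto simp: words_def)
    show "drop (length p) \<in> {s \<in> words 2 n. take (length p) s = p} \<rightarrow> words 2 (n - length p)"
      by (auto simp: words_def dest: in_set_dropD)
    show "drop (length p) (p @ x) = x" for x by simp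
    show "p @ drop (length p) y = y" if "y \<in> {s \<in> words 2 n. take (length p) s = p}" for y
      using that by (metis (mono_tags, lifting) append_take_drop_id mem_Collect_eq)
  qed
  then show ?thesis by (simp add: bij_betw_same_card[symmetric] card_words)
qed

lemma card_bad:
  assumes sp: "set p \<subseteq> {0..<2}" and d: "length p \<le> d" "d + length p \<le> n"
  shows "card {s\<in>words 2 n. take (length p) s = p \<and> take (length p) (drop d s) = p}
           \<le> 2 ^ (n - 2 * length p)"
proof -
  let ?P = "length p"
  let ?h = "\<lambda>(u, v). p @ u @ p @ v"
  have sub: "{s\<in>words 2 n. take ?P s = p \<and> take ?P (drop d s) = p}
        \<subseteq> ?h ` (words 2 (d - ?P) \<times> words 2 (n - d - ?P))"
  proof
    fix s assume s: "s \<in> {s\<in>words 2 n. take ?P s = p \<and> take ?P (drop d s) = p}"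
    then have ls: "length s = n" and ss: "set s \<subseteq> {0..<2}" and t1: "take ?P s = p"
      and t2: "take ?P (drop d s) = p" by (auto simp: words_def)
    define u where "u = drop ?P (take d s)"
    define v where "v = drop ?P (drop d s)"
    have "take d s = take ?P (take d s) @ u" unfolding u_def by (rule append_take_drop_id[symmetric])
    also have "take ?P (take d s) = p" using t1 d by (simp add: min_def)
    finally have e1: "take d s = p @ u" .
    have e2: "drop d s = p @ v" unfolding v_def using t2 by (metis append_take_drop_id)
    have "s = p @ u @ p @ v" using e1 e2 by (metis append_take_drop_id append.assoc)
    moreover have "u \<in> words 2 (d - ?P)" unfolding u_def words_def using ls ss d
      by (auto dest!: in_set_dropD in_set_takeD)
    moreover have "v \<in> words 2 (n - d - ?P)" unfolding v_def words_def using ls ss d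
      by (auto dest!: in_set_dropD)
    ultimately show "s \<in> ?h ` (words 2 (d - ?P) \<times> words 2 (n - d - ?P))" by force
  qed
  have "card {s\<in>words 2 n. take ?P s = p \<and> take ?P (drop d s) = p}
        \<le> card (?h ` (words 2 (d - ?P) \<times> words 2 (n - d - ?P)))"
    by (rule card_mono) (use sub in \<open>simp_all add: finite_words\<close>)
  also have "\<dots> \<le> card (words 2 (d - ?P) \<times> words 2 (n - d - ?P))" by (rule card_image_le) (simp add: finite_words)
  also have "\<dots> = 2 ^ (d - ?P) * 2 ^ (n - d - ?P)" by (simp add: card_cartesian_product card_words)
  also have "\<dots> = 2 ^ (n - 2 * ?P)"
  proof -
    have "d - ?P + (n - d - ?P) = n - 2 * ?P" using d by simp
    then show ?thesis by (metis power_add)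
  qed
  finally show ?thesis .
qed


lemma marker:
  assumes k: "1 \<le> k" "k + 1 \<le> \<kappa>" "\<kappa> < n" and tk: "n - \<kappa> + 1 \<le> 2 ^ k"
  shows "\<exists>S. S \<subseteq> words 2 n \<and> wmu \<kappa> n S \<and> 2 ^ n \<le> card S * 2 ^ (k + 2)"
proof -
  define p :: "nat list" where "p = replicate k 1 @ [0]"
  define P where "P = length p"
  have P: "P = k + 1" unfolding P_def p_def by simp
  define t where "t = n - \<kappa> + 1"
  have sp: "set p \<subseteq> {0..<2}" unfolding p_def by auto
  define M where "M = {s\<in>words 2 n. take P s = p}"
  define Bad where "Bad d = {s\<in>words 2 n. take P s = p \<and> take P (drop d s) = p}" for d
  define S where "S = M - (\<Union>d\<in>{P..<t}. Bad d)"
  have SW: "S \<subseteq> words 2 n" unfolding S_def M_def by auto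
  have pk: "p ! k = 0" unfolding p_def by (simp add: nth_append)
  have pj: "p ! j = 1" if "j < k" for j using that unfolding p_def by (simp add: nth_append)
  have wS: "wmu \<kappa> n S" unfolding wmu_def
  proof (intro ballI allI impI)
    fix a b l assume a: "a \<in> S" and b: "b \<in> S" and l: "\<kappa> \<le> l" "l < n"
    show "take l a \<noteq> drop (n - l) b"
    proof
      assume e: "take l a = drop (n - l) b"
      define d where "d = n - l"
      have d: "1 \<le> d" "d < t" using l k unfolding d_def t_def by auto
      have lb: "length b = n" using b unfolding S_def M_def words_def by auto
      have ta: "take P a = p" using a unfolding S_def M_def by auto
      have tb: "take P b = p" using b unfolding S_def M_def by auto
      have "take P (take l a) = take P a" using l k P by (simp add: min_def)
      then have tdb: "take P (drop d b) = p" using e ta unfolding d_def by simp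
      show False
      proof (cases "P \<le> d")
        case True
        then have "b \<in> Bad d" using tb tdb b unfolding Bad_def S_def M_def by auto
        then show False using b True d unfolding S_def by auto
      next
        case False
        then have dk: "d \<le> k" using P by simp
        have "b ! k = take P b ! k" using P by simp
        then have bk: "b ! k = 0" using tb pk by simp
        have "take P (drop d b) ! (k - d) = drop d b ! (k - d)" using P dk by simp
        also have "\<dots> = b ! k" using dk lb l k by (simp add: nth_drop)
        finally have "p ! (k - d) = 0" using tdb bk by simp
        moreover have "p ! (k - d) = 1" using pj[of "k - d"] dk d by simp
        ultimately show False by simp
      qed
    qed
  qed
  have fin: "finite (\<Union>d\<in>{P..<t}. Bad d)" unfolding Bad_def using finite_words by simp
  have cM: "card M = 2 ^ (n - P)" unfolding M_def P_def
    by (rule card_prefix[OF sp]) (use k P P_def in simp)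
  have cU: "card (\<Union>d\<in>{P..<t}. Bad d) \<le> 2 ^ (n - P - 1)"
  proof (cases "P < t")
    case False then show ?thesis by simp
  next
    case True
    have n2P: "2 * P \<le> n" using True k P unfolding t_def by simp
    have "card (\<Union>d\<in>{P..<t}. Bad d) \<le> (\<Sum>d\<in>{P..<t}. card (Bad d))" by (rule card_UN_le) simp
    also have "\<dots> \<le> (\<Sum>d\<in>{P..<t}. 2 ^ (n - 2 * P))"
    proof (rule sum_mono)
      fix d assume d: "d \<in> {P..<t}"
      show "card (Bad d) \<le> 2 ^ (n - 2 * P)" unfolding Bad_def P_def
        by (rule card_bad[OF sp]) (use d k P P_def t_def in auto)
    qed
    also have "\<dots> = (t - P) * 2 ^ (n - 2 * P)" by simp
    also have "\<dots> \<le> 2 ^ k * 2 ^ (n - 2 * P)" using tk P t_def by simp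
    also have "\<dots> = 2 ^ (n - P - 1)"
    proof -
      have "k + (n - 2 * P) = n - P - 1" using P n2P by simp
      then show ?thesis by (metis power_add)
    qed
    finally show ?thesis .
  qed
  have "card M - card (\<Union>d\<in>{P..<t}. Bad d) \<le> card S"
    unfolding S_def by (rule diff_card_le_card_Diff[OF fin])
  then have cS: "2 ^ (n - P) - 2 ^ (n - P - 1) \<le> card S" using cM cU by linarith
  have nP: "P + 1 \<le> n" using k P by simp
  have e1: "(2::nat) ^ (n - P) = 2 * 2 ^ (n - P - 1)"
  proof -
    have "n - P = Suc (n - P - 1)" using nP by simp
    then show ?thesis by (metis power_Suc)
  qed
  have c0: "2 ^ (n - P - 1) \<le> card S" using cS e1 by simp
  have m1: "2 ^ (n - P - 1) * 2 ^ (k + 2) \<le> card S * 2 ^ (k + 2)" using c0 by (rule mult_le_mono1)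
  have m2: "(2::nat) ^ (n - P - 1) * 2 ^ (k + 2) = 2 ^ n"
  proof -
    have "n - P - 1 + (k + 2) = n" using nP P by simp
    then show ?thesis by (metis power_add)
  qed
  have "2 ^ n \<le> card S * 2 ^ (k + 2)" using m1 unfolding m2 .
  then show ?thesis using SW wS by blast
qed


lemma A_MU_eq: "A_BAL_MU q n = A_BAL_WMU q 1 n"
  unfolding A_BAL_MU_def A_BAL_WMU_def mu_def ..

lemma fin_codes: "finite (card ` {C. C \<subseteq> words q n \<and> (\<forall>x\<in>C. balanced_word q x) \<and> wmu \<kappa> n C})"
proof -
  have sub: "{C. C \<subseteq> words q n \<and> (\<forall>x\<in>C. balanced_word q x) \<and> wmu \<kappa> n C} \<subseteq> Pow (words q n)" by blast
  have "finite (Pow (words q n))" by (simp add: finite_words)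
  then have "finite {C. C \<subseteq> words q n \<and> (\<forall>x\<in>C. balanced_word q x) \<and> wmu \<kappa> n C}"
    by (rule finite_subset[OF sub])
  then show ?thesis by (rule finite_imageI)
qed

lemma A_ge:
  assumes "C \<subseteq> words q n" "\<forall>x\<in>C. balanced_word q x" "wmu \<kappa> n C"
  shows "card C \<le> A_BAL_WMU q \<kappa> n"
proof -
  have "C \<in> {C. C \<subseteq> words q n \<and> (\<forall>x\<in>C. balanced_word q x) \<and> wmu \<kappa> n C}" using assms by blast
  then have "card C \<in> card ` {C. C \<subseteq> words q n \<and> (\<forall>x\<in>C. balanced_word q x) \<and> wmu \<kappa> n C}" by (rule imageI)
  then show ?thesis unfolding A_BAL_WMU_def by (rule Max_ge[OF fin_codes])
qed

lemma A_le:
  assumes "\<And>C. C \<subseteq> words q n \<Longrightarrow> \<forall>x\<in>C. balanced_word q x \<Longrightarrow> wmu \<kappa> n C \<Longrightarrow> card C \<le> B"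
  shows "A_BAL_WMU q \<kappa> n \<le> B"
  unfolding A_BAL_WMU_def
proof (rule Max.boundedI[OF fin_codes])
  have "{} \<in> {C. C \<subseteq> words q n \<and> (\<forall>x\<in>C. balanced_word q x) \<and> wmu \<kappa> n C}"
    by (simp add: wmu_def)
  then show "card ` {C. C \<subseteq> words q n \<and> (\<forall>x\<in>C. balanced_word q x) \<and> wmu \<kappa> n C} \<noteq> {}" by blast
  fix a assume "a \<in> card ` {C. C \<subseteq> words q n \<and> (\<forall>x\<in>C. balanced_word q x) \<and> wmu \<kappa> n C}"
  then show "a \<le> B" using assms by auto
qed

lemma wmu_mono: "k1 \<le> k2 \<Longrightarrow> wmu k1 n C \<Longrightarrow> wmu k2 n C"
  unfolding wmu_def by auto

lemma wmu_lift: "wmu \<kappa> n S \<Longrightarrow> wmu \<kappa> n {w\<in>X. map g w \<in> S}"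
  unfolding wmu_def
proof (intro ballI allI impI)
  fix a b l assume h: "\<forall>a\<in>S. \<forall>b\<in>S. \<forall>l. \<kappa> \<le> l \<longrightarrow> l < n \<longrightarrow> take l a \<noteq> drop (n - l) b"
    and a: "a \<in> {w \<in> X. map g w \<in> S}" and b: "b \<in> {w \<in> X. map g w \<in> S}" and l: "\<kappa> \<le> l" "l < n"
  show "take l a \<noteq> drop (n - l) b"
  proof
    assume "take l a = drop (n - l) b"
    then have "take l (map g a) = drop (n - l) (map g b)" by (simp add: take_map drop_map)
    then show False using h a b l by auto
  qed
qed

lemma filter_rotate_len: "length (filter P (rotate i x)) = length (filter P x)"
proof -
  have "length (filter P x) = length (filter P (take (i mod length x) x @ drop (i mod length x) x))" by simp
  then show ?thesis unfolding rotate_drop_take filter_append length_append by simp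
qed

lemma rot_closed: "w \<in> {x\<in>words q n. balanced_word q x} \<Longrightarrow> rotate i w \<in> {x\<in>words q n. balanced_word q x}"
  unfolding words_def balanced_word_def by (simp add: filter_rotate_len)

lemma card_bal2: "even n \<Longrightarrow> card {x\<in>words 2 n. balanced_word 2 x} = n choose (n div 2)"
proof -
  assume e: "even n"
  have "{x\<in>words 2 n. balanced_word 2 x} = {x\<in>words 2 n. cnt x = n div 2}"
    using e by (auto simp: bal2 words_def)
  then show ?thesis by (simp add: card_cnt)
qed

lemma card_bal4: "even n \<Longrightarrow> card {x\<in>words 4 n. balanced_word 4 x} = (n choose (n div 2)) * 2 ^ n"
proof -
  assume e: "even n"
  have "{x\<in>words 4 n. balanced_word 4 x} = {w\<in>words 4 n. (\<lambda>x. cnt x = n div 2) (map (\<lambda>c. c div 2) w) \<and> (\<lambda>y. True) (map (\<lambda>c. c mod 2) w)}"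
    using e bal4 by auto
  also have "card \<dots> = card {x\<in>words 2 n. cnt x = n div 2} * card {y\<in>words 2 n. True}"
    by (rule card_prod4)
  also have "\<dots> = (n choose (n div 2)) * 2 ^ n" by (simp add: card_cnt card_words)
  finally show ?thesis .
qed

lemma upper_A:
  assumes "even n" "1 \<le> \<kappa>" "\<kappa> < n" "q = 2 \<or> q = 4"
  shows "A_BAL_WMU q \<kappa> n * (n - \<kappa> + 1) \<le> card {x\<in>words q n. balanced_word q x}"
proof -
  have "A_BAL_WMU q \<kappa> n \<le> card {x\<in>words q n. balanced_word q x} div (n - \<kappa> + 1)"
  proof (rule A_le)
    fix C assume C: "C \<subseteq> words q n" "\<forall>x\<in>C. balanced_word q x" "wmu \<kappa> n C"
    have "card C * (n - \<kappa> + 1) \<le> card {x\<in>words q n. balanced_word q x}"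
    proof (rule upper[OF _ _ _ _ C(3) assms(2) assms(3)])
      show "finite {x\<in>words q n. balanced_word q x}" using finite_words by simp
      show "\<forall>w\<in>{x\<in>words q n. balanced_word q x}. length w = n" by (simp add: words_def)
      show "\<forall>w\<in>{x\<in>words q n. balanced_word q x}. \<forall>i. rotate i w \<in> {x\<in>words q n. balanced_word q x}"
        using rot_closed by blast
      show "C \<subseteq> {x\<in>words q n. balanced_word q x}" using C by auto
    qed
    then show "card C \<le> card {x\<in>words q n. balanced_word q x} div (n - \<kappa> + 1)"
      by (simp add: less_eq_div_iff_mult_less_eq)
  qed
  then show ?thesis by (simp add: less_eq_div_iff_mult_less_eq)
qed

lemma suc_le_pow: "Suc j \<le> 2 ^ j"
  by (induction j) auto


theorem theorem6:
  fixes n \<kappa> :: nat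
  assumes "n \<ge> 2" and "even n" and "1 \<le> \<kappa>" and "\<kappa> < n"
  shows "(3/64) * (real (n choose (n div 2)) * 2 ^ n / (real n - real \<kappa> + 1))
           \<le> real (A_BAL_WMU 4 \<kappa> n)
       \<and> real (A_BAL_WMU 4 \<kappa> n) \<le> real (n choose (n div 2)) * 2 ^ n / (real n - real \<kappa> + 1)
       \<and> real (A_BAL_WMU 2 \<kappa> n) \<le> real (n choose (n div 2)) / (real n - real \<kappa> + 1)
       \<and> real (n choose (n div 2)) / (2 * (real n - 1)) \<le> real (A_BAL_MU 2 n)
       \<and> real (A_BAL_MU 2 n) \<le> real (n choose (n div 2)) / real n"
proof -
  note n2 = assms(1) and ev = assms(2) and k1 = assms(3) and kn = assms(4)
  define m where "m = n div 2"
  have nm: "n = 2 * m" using ev unfolding m_def by simp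
  have m1: "1 \<le> m" using nm n2 by simp
  define B where "B = n choose (n div 2)"
  define t where "t = n - \<kappa> + 1"
  have tr: "real n - real \<kappa> + 1 = real t" unfolding t_def using kn by (simp add: of_nat_diff)
  have t2: "2 \<le> t" unfolding t_def using kn by simp
  have U4: "A_BAL_WMU 4 \<kappa> n * t \<le> B * 2 ^ n"
    using upper_A[OF ev k1 kn, of 4] card_bal4[OF ev] unfolding t_def B_def by simp
  have U2: "A_BAL_WMU 2 \<kappa> n * t \<le> B"
    using upper_A[OF ev k1 kn, of 2] card_bal2[OF ev] unfolding t_def B_def by simp
  have UMU: "A_BAL_MU 2 n * n \<le> B"
  proof -
    have "A_BAL_WMU 2 1 n * (n - 1 + 1) \<le> B"
      using upper_A[OF ev _ _, of 1 2] card_bal2[OF ev] n2 unfolding B_def by simp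
    then show ?thesis using n2 unfolding A_MU_eq by simp
  qed
  have binom: "B = 2 * ((n - 1) choose (m - 1))"
  proof -
    have a: "n = Suc (n - 1)" "m = Suc (m - 1)" using n2 m1 by auto
    have "n choose m = ((n - 1) choose (m - 1)) + ((n - 1) choose m)"
      by (subst a(1), subst a(2)) (simp only: binomial_Suc_Suc, use m1 in simp)
    moreover have "(n - 1) choose m = (n - 1) choose (m - 1)"
    proof -
      have "m \<le> n - 1" using nm m1 by simp
      then have "(n - 1) choose m = (n - 1) choose (n - 1 - m)" by (rule binomial_symmetric)
      moreover have "n - 1 - m = m - 1" using nm by simp
      ultimately show ?thesis by simp
    qed
    ultimately show ?thesis unfolding B_def m_def[symmetric] by simp
  qed
  have dW: "dyck n \<subseteq> words 2 n" "\<forall>x\<in>dyck n. balanced_word 2 x" unfolding dyck_def by auto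
  have Dle: "card (dyck n) \<le> A_BAL_MU 2 n"
    unfolding A_MU_eq by (rule A_ge[OF dW]) (use dyck_mu in \<open>simp add: mu_def\<close>)
  have BD: "B \<le> 2 * (n - 1) * card (dyck n)"
    using dyck_card[OF nm m1] binom nm by simp
  have LMU: "B \<le> 2 * (n - 1) * A_BAL_MU 2 n"
    using BD mult_le_mono2[OF Dle, of "2 * (n - 1)"] by linarith
  have L4: "3 * (B * 2 ^ n) \<le> 64 * t * A_BAL_WMU 4 \<kappa> n"
  proof -
    define k where "k = (LEAST k. t \<le> 2 ^ k)"
    have tk: "t \<le> 2 ^ k" unfolding k_def by (rule LeastI[of _ t]) (simp add: less_imp_le)
    have kpos: "1 \<le> k"
    proof (rule ccontr)
      assume "\<not> 1 \<le> k" then have "k = 0" by simp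
      then show False using tk t2 by simp
    qed
    have tk2: "2 ^ (k - 1) < t"
    proof -
      have "\<not> t \<le> 2 ^ (k - 1)" unfolding k_def by (rule not_less_Least) (use kpos k_def in simp)
      then show ?thesis by simp
    qed
    have p8: "2 ^ (k + 2) \<le> 8 * t"
    proof -
      have "(2::nat) ^ (k + 2) = 8 * 2 ^ (k - 1)"
      proof -
        have "k + 2 = 3 + (k - 1)" using kpos by simp
        then have "(2::nat) ^ (k + 2) = 2 ^ 3 * 2 ^ (k - 1)" by (metis power_add)
        then show ?thesis by simp
      qed
      then show ?thesis using tk2 by simp
    qed
    show ?thesis
    proof (cases "k + 1 \<le> \<kappa>")
      case True
      obtain S where SW: "S \<subseteq> words 2 n" and wS: "wmu \<kappa> n S" and cS: "2 ^ n \<le> card S * 2 ^ (k + 2)"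
        using marker[OF kpos True kn] tk unfolding t_def by blast
      define C4 where "C4 = {w \<in> {x\<in>words 4 n. balanced_word 4 x}. map (\<lambda>c. c mod 2) w \<in> S}"
      have wC: "wmu \<kappa> n C4" unfolding C4_def by (rule wmu_lift[OF wS])
      have "card C4 \<le> A_BAL_WMU 4 \<kappa> n" by (rule A_ge[OF _ _ wC]) (auto simp: C4_def)
      moreover have "card C4 = B * card S"
      proof -
        have "C4 = {w\<in>words 4 n. (\<lambda>x. cnt x = n div 2) (map (\<lambda>c. c div 2) w) \<and> (\<lambda>y. y \<in> S) (map (\<lambda>c. c mod 2) w)}"
          unfolding C4_def using ev bal4 by auto
        also have "card \<dots> = card {x\<in>words 2 n. cnt x = n div 2} * card {y\<in>words 2 n. y \<in> S}"
          by (rule card_prod4)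
        also have "{y\<in>words 2 n. y \<in> S} = S" using SW by auto
        finally show ?thesis unfolding B_def by (simp add: card_cnt)
      qed
      ultimately have AS: "B * card S \<le> A_BAL_WMU 4 \<kappa> n" by simp
      have "B * 2 ^ n \<le> B * (card S * 2 ^ (k + 2))" using cS by (rule mult_le_mono2)
      also have "\<dots> \<le> B * (card S * (8 * t))" using p8 by (intro mult_le_mono2) simp
      also have "\<dots> = 8 * t * (B * card S)" by (simp add: ac_simps)
      also have "\<dots> \<le> 8 * t * A_BAL_WMU 4 \<kappa> n" using AS by (rule mult_le_mono2)
      finally have "B * 2 ^ n \<le> 8 * t * A_BAL_WMU 4 \<kappa> n" .
      then show ?thesis by linarith
    next
      case False
      have "k \<le> 2 ^ (k - 1)" using suc_le_pow[of "k - 1"] kpos by simp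
      then have "\<kappa> < t" using False tk2 by simp
      then have tn: "6 * (n - 1) \<le> 64 * t" unfolding t_def by simp
      define CD where "CD = {w \<in> words 4 n. map (\<lambda>c. c div 2) w \<in> dyck n}"
      have wC: "wmu \<kappa> n CD" unfolding CD_def
        by (rule wmu_lift) (rule wmu_mono[OF k1], use dyck_mu in \<open>simp add: mu_def\<close>)
      have balC: "\<forall>x\<in>CD. balanced_word 4 x"
      proof
        fix x assume x: "x \<in> CD"
        then have "map (\<lambda>c. c div 2) x \<in> dyck n" "x \<in> words 4 n" unfolding CD_def by auto
        then show "balanced_word 4 x" using bal4 unfolding dyck_def bal2 words_def by auto
      qed
      have "card CD \<le> A_BAL_WMU 4 \<kappa> n" by (rule A_ge[OF _ balC wC]) (auto simp: CD_def)
      moreover have "card CD = card (dyck n) * 2 ^ n"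
      proof -
        have "CD = {w\<in>words 4 n. (\<lambda>x. x \<in> dyck n) (map (\<lambda>c. c div 2) w) \<and> (\<lambda>y. True) (map (\<lambda>c. c mod 2) w)}"
          unfolding CD_def by simp
        also have "card \<dots> = card {x\<in>words 2 n. x \<in> dyck n} * card {y\<in>words 2 n. True}"
          by (rule card_prod4)
        also have "{x\<in>words 2 n. x \<in> dyck n} = dyck n" using dW by auto
        finally show ?thesis by (simp add: card_words)
      qed
      ultimately have AD: "card (dyck n) * 2 ^ n \<le> A_BAL_WMU 4 \<kappa> n" by simp
      have "B * 2 ^ n \<le> 2 * (n - 1) * card (dyck n) * 2 ^ n" using BD by (rule mult_le_mono1)
      then have "3 * (B * 2 ^ n) \<le> 3 * (2 * (n - 1) * card (dyck n) * 2 ^ n)"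
        by (rule mult_le_mono2)
      also have "\<dots> = 6 * (n - 1) * (card (dyck n) * 2 ^ n)" by simp
      also have "\<dots> \<le> 6 * (n - 1) * A_BAL_WMU 4 \<kappa> n" using AD by (rule mult_le_mono2)
      also have "\<dots> \<le> 64 * t * A_BAL_WMU 4 \<kappa> n" using tn by (rule mult_le_mono1)
      finally show ?thesis .
    qed
  qed
  have tp: "0 < real t" using t2 by simp
  have n1p: "0 < 2 * (real n - 1)" using n2 by simp
  have np: "0 < real n" using n2 by simp
  have r1: "3 * (real B * 2 ^ n) \<le> 64 * real t * real (A_BAL_WMU 4 \<kappa> n)"
  proof -
    have "real (3 * (B * 2 ^ n)) \<le> real (64 * t * A_BAL_WMU 4 \<kappa> n)" using L4 by (simp only: of_nat_le_iff)
    then show ?thesis by simp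
  qed
  have r2: "real (A_BAL_WMU 4 \<kappa> n) * real t \<le> real B * 2 ^ n"
  proof -
    have "real (A_BAL_WMU 4 \<kappa> n * t) \<le> real (B * 2 ^ n)" using U4 by (simp only: of_nat_le_iff)
    then show ?thesis by simp
  qed
  have r3: "real (A_BAL_WMU 2 \<kappa> n) * real t \<le> real B"
  proof -
    have "real (A_BAL_WMU 2 \<kappa> n * t) \<le> real B" using U2 by (simp only: of_nat_le_iff)
    then show ?thesis by simp
  qed
  have r4: "real B \<le> 2 * (real n - 1) * real (A_BAL_MU 2 n)"
  proof -
    have "real B \<le> real (2 * (n - 1) * A_BAL_MU 2 n)" using LMU by (simp only: of_nat_le_iff)
    then show ?thesis using n2 by (simp add: of_nat_diff)
  qed
  have r5: "real (A_BAL_MU 2 n) * real n \<le> real B"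
  proof -
    have "real (A_BAL_MU 2 n * n) \<le> real B" using UMU by (simp only: of_nat_le_iff)
    then show ?thesis by simp
  qed
  have g1: "(3/64) * (real B * 2 ^ n / real t) \<le> real (A_BAL_WMU 4 \<kappa> n)"
    using r1 tp by (simp add: field_simps)
  have g2: "real (A_BAL_WMU 4 \<kappa> n) \<le> real B * 2 ^ n / real t"
    using r2 tp by (simp add: field_simps)
  have g3: "real (A_BAL_WMU 2 \<kappa> n) \<le> real B / real t"
    using r3 tp by (simp add: field_simps)
  have g4: "real B / (2 * (real n - 1)) \<le> real (A_BAL_MU 2 n)"
    using r4 n1p by (simp add: divide_le_eq mult.commute)
  have g5: "real (A_BAL_MU 2 n) \<le> real B / real n"
    using r5 np by (simp add: field_simps)
  show ?thesis using g1 g2 g3 g4 g5 unfolding tr B_def by blast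
qed

end
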